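(* Let $$c=s^8-(2-2i)s^7-(6+2i)s^6+(10+2i)s^5+4is^4+(10-2i)s^3+(6-2i)s^2-(2+2i)s-1,$$ $$d=s^6-(3+3i)s^5+3is^4+(4-4i)s^3+3s^2+(3+3i)s+i,$$ and $$y=-\frac{(1+i)(s^2-1)(s^2+2is+1)(s^2-2is+1)^2\,c}{4s(s^2+i)(s^2-i)^2(s^2+(1+i)s-i)\,d},\qquad t=\frac{(s^2-1)^2(s^4+6s^2+1)^3}{32s^2(s^4+1)^3}.$$ Then $y(t)$ is a solution of $\mathrm{P}_{\mathrm{VI}}$ with parameters $(\theta_1,\theta_2,\theta_3,\theta_4)=(1/2,1/2,1/2,3/4)$.
   Context: $\mathrm{P}_{\mathrm{VI}}$ is the equation $$\frac{d^2y}{dt^2}=\frac12\Big(\frac1y+\frac1{y-1}+\frac1{y-t}\Big)\Big(\frac{dy}{dt}\Big)^2-\Big(\frac1t+\frac1{t-1}+\frac1{y-t}\Big)\frac{dy}{dt}+\frac{y(y-1)(y-t)}{t^2(t-1)^2}\Big(\alpha+\beta\frac{t}{y^2}+\gamma\frac{t-1}{(y-1)^2}+\delta\frac{t(t-1)}{(y-t)^2}\Big),$$ with $\alpha=(\theta_4-1)^2/2$, $\beta=-\theta_1^2/2$, $\gamma=\theta_3^2/2$, $\delta=(1-\theta_2^2)/2$. When $y,t$ are given as rational functions of a parameter on a curve, derivatives with respect to $t$ are computed via the chain rule. Here $i=\sqrt{-1}$. *)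

theory Defs
  imports "HOL-Analysis.Analysis"
begin

definition pvi_alpha :: "complex \<Rightarrow> complex" where
  "pvi_alpha th4 = (th4 - 1) ^ 2 / 2"
definition pvi_beta :: "complex \<Rightarrow> complex" where
  "pvi_beta th1 = - (th1 ^ 2) / 2"
definition pvi_gamma :: "complex \<Rightarrow> complex" where
  "pvi_gamma th3 = th3 ^ 2 / 2"
definition pvi_delta :: "complex \<Rightarrow> complex" where
  "pvi_delta th2 = (1 - th2 ^ 2) / 2"

definition pvi_rhs ::
  "complex \<Rightarrow> complex \<Rightarrow> complex \<Rightarrow> complex \<Rightarrow> complex \<Rightarrow> complex \<Rightarrow> complex \<Rightarrow> complex" where
  "pvi_rhs th1 th2 th3 th4 t y y1 =
     (1/2)  *  (1/y + 1/(y - 1) + 1/(y - t))  *  y1 ^ 2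
     - (1/t + 1/(t - 1) + 1/(y - t))  *  y1
     + y  *  (y - 1)  *  (y - t) / (t ^ 2  *  (t - 1) ^ 2)  * 
       (pvi_alpha th4 + pvi_beta th1  *  t / y ^ 2 + pvi_gamma th3  *  (t - 1) / (y - 1) ^ 2
        + pvi_delta th2  *  t  *  (t - 1) / (y - t) ^ 2)"

text \<open>A parametrized curve s \<mapsto> (t(s), y(s)) gives a solution y(t) of P_VI
  if, at every parameter value s where t and y are holomorphic, t'(s) \<noteq> 0 and
  all terms of the equation are defined (y \<notin> {0,1,t}, t \<notin> {0,1}), the equation holds
  with d/dt computed via the chain rule d/dt = (1/t'(s)) d/ds.\<close>
definition pvi_param_solution ::
  "complex \<Rightarrow> complex \<Rightarrow> complex \<Rightarrow> complex \<Rightarrow> (complex \<Rightarrow> complex) \<Rightarrow> (complex \<Rightarrow> complex) \<Rightarrow> complex set \<Rightarrow> bool" where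
  "pvi_param_solution th1 th2 th3 th4 yf tf S \<longleftrightarrow>
     (\<forall>s \<in> S. deriv tf s \<noteq> 0 \<longrightarrow> yf s \<noteq> 0 \<longrightarrow> yf s \<noteq> 1 \<longrightarrow> yf s \<noteq> tf s \<longrightarrow>
        tf s \<noteq> 0 \<longrightarrow> tf s \<noteq> 1 \<longrightarrow>
        (let y1 = (\<lambda>u. deriv yf u / deriv tf u) in
         deriv y1 s / deriv tf s = pvi_rhs th1 th2 th3 th4 (tf s) (yf s) (y1 s)))"

definition cpoly :: "complex \<Rightarrow> complex" where
  "cpoly s = s ^ 8 - (2 - 2 * \<i>) * s ^ 7 - (6 + 2 * \<i>) * s ^ 6 + (10 + 2 * \<i>) * s ^ 5 + 4 * \<i> * s ^ 4
             + (10 - 2 * \<i>) * s ^ 3 + (6 - 2 * \<i>) * s ^ 2 - (2 + 2 * \<i>) * s - 1"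

definition dpoly :: "complex \<Rightarrow> complex" where
  "dpoly s = s ^ 6 - (3 + 3 * \<i>) * s ^ 5 + 3 * \<i> * s ^ 4 + (4 - 4 * \<i>) * s ^ 3 + 3 * s ^ 2 + (3 + 3 * \<i>) * s + \<i>"

definition yden :: "complex \<Rightarrow> complex" where
  "yden s = 4 * s * (s ^ 2 + \<i>) * (s ^ 2 - \<i>) ^ 2 * (s ^ 2 + (1 + \<i>) * s - \<i>) * dpoly s"

definition yfun :: "complex \<Rightarrow> complex" where
  "yfun s = - ((1 + \<i>) * (s ^ 2 - 1) * (s ^ 2 + 2 * \<i> * s + 1) * (s ^ 2 - 2 * \<i> * s + 1) ^ 2  *  cpoly s) / yden s"

definition tden :: "complex \<Rightarrow> complex" where
  "tden s = 32 * s ^ 2 * (s ^ 4 + 1) ^ 3"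

definition tfun :: "complex \<Rightarrow> complex" where
  "tfun s = (s ^ 2 - 1) ^ 2 * (s ^ 4 + 6 * s ^ 2 + 1) ^ 3 / tden s"

end

theory Submission
  imports Defs
begin

lemma ii: "\<i>^2 = (-1::complex)" by simp

definition qa :: "complex \<Rightarrow> complex \<Rightarrow> complex" where "qa j u = u^2 - 1"
definition qe1 :: "complex \<Rightarrow> complex \<Rightarrow> complex" where "qe1 j u = u^2 + 2*j*u + 1"
definition qe2 :: "complex \<Rightarrow> complex \<Rightarrow> complex" where "qe2 j u = u^2 - 2*j*u + 1"
definition qc :: "complex \<Rightarrow> complex \<Rightarrow> complex" where "qc j u = u ^ 8 - (2 - 2 * j) * u ^ 7 - (6 + 2 * j) * u ^ 6 + (10 + 2 * j) * u ^ 5 + 4 * j * u ^ 4 + (10 - 2 * j) * u ^ 3 + (6 - 2 * j) * u ^ 2 - (2 + 2 * j) * u - 1"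
definition qhp :: "complex \<Rightarrow> complex \<Rightarrow> complex" where "qhp j u = u^2 + j"
definition qhm :: "complex \<Rightarrow> complex \<Rightarrow> complex" where "qhm j u = u^2 - j"
definition qk :: "complex \<Rightarrow> complex \<Rightarrow> complex" where "qk j u = u ^ 2 + (1 + j) * u - j"
definition qd :: "complex \<Rightarrow> complex \<Rightarrow> complex" where "qd j u = u ^ 6 - (3 + 3 * j) * u ^ 5 + 3 * j * u ^ 4 + (4 - 4 * j) * u ^ 3 + 3 * u ^ 2 + (3 + 3 * j) * u + j"
definition qcc :: "complex \<Rightarrow> complex \<Rightarrow> complex" where "qcc j u = u^2 + 1"
definition qdm :: "complex \<Rightarrow> complex \<Rightarrow> complex" where "qdm j u = u^2 - 2*u - 1"
definition qdq :: "complex \<Rightarrow> complex \<Rightarrow> complex" where "qdq j u = u^2 + 2*u - 1"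
definition qr8a :: "complex \<Rightarrow> complex \<Rightarrow> complex" where "qr8a j u = ((1 + j) + (-4*j)*u + (4 + 8*j)*u^2 + (12 - 8*j)*u^3 + (-4 + 4*j)*u^4 + (-8 + 12*j)*u^5 + (-8 - 4*j)*u^6 + (-4)*u^7 + (-1 - j)*u^8)"
definition qr8b :: "complex \<Rightarrow> complex \<Rightarrow> complex" where "qr8b j u = ((-1) + (8 - 8*j)*u + (8*j)*u^2 + (-8 - 8*j)*u^3 + 2*u^4 + (8 - 8*j)*u^5 + (-8*j)*u^6 + (-8 - 8*j)*u^7 + (-1)*u^8)"
definition qr26 :: "complex \<Rightarrow> complex \<Rightarrow> complex" where "qr26 j u = ((4 + 4*j) + (24 + 8*j)*u + (-68 + 92*j)*u^2 + (-208 - 144*j)*u^3 + (728 - 136*j)*u^4 + (3456 + 1600*j)*u^5 + (1288 + 1832*j)*u^6 + (-7120 + 4080*j)*u^7 + (2972 - 3652*j)*u^8 + (-5992 + 1864*j)*u^9 + (-10748 - 4284*j)*u^10 + (14560 - 11168*j)*u^11 + (-22448 - 22128*j)*u^12 + (-33728 - 33728*j)*u^13 + (22128 + 22448*j)*u^14 + (-11168 + 14560*j)*u^15 + (4284 + 10748*j)*u^16 + (1864 - 5992*j)*u^17 + (3652 - 2972*j)*u^18 + (4080 - 7120*j)*u^19 + (-1832 - 1288*j)*u^20 + (1600 + 3456*j)*u^21 + (136 - 728*j)*u^22 + (-144 - 208*j)*u^23 + (-92 + 68*j)*u^24 + (8 + 24*j)*u^25 + (-4 - 4*j)*u^26)"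
definition qr24 :: "complex \<Rightarrow> complex \<Rightarrow> complex" where "qr24 j u = 1 + (4 - 2*j)*u + (3 + 18*j)*u^2 + (-12 + 36*j)*u^3 + (158 - 42*j)*u^4 + (656 - 280*j)*u^5 + (402 - 210*j)*u^6 + (-540 + 780*j)*u^7 + (59 - 870*j)*u^8 + (540 + 1078*j)*u^9 + (-2215 - 588*j)*u^10 + (552 - 5592*j)*u^11 + (-6124 + 1692*j)*u^12 + (-10592)*u^13 + (6124 + 1692*j)*u^14 + (552 + 5592*j)*u^15 + (2215 - 588*j)*u^16 + (540 - 1078*j)*u^17 + (-59 - 870*j)*u^18 + (-540 - 780*j)*u^19 + (-402 - 210*j)*u^20 + (656 + 280*j)*u^21 + (-158 - 42*j)*u^22 + (-12 - 36*j)*u^23 + (-3 + 18*j)*u^24 + (4 + 2*j)*u^25 + (-1)*u^26"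
definition qNyD :: "complex \<Rightarrow> complex \<Rightarrow> complex" where "qNyD j u = ((-2 - 2*j) + (-12 - 4*j)*u + (30 - 66*j)*u^2 + (80 + 16*j)*u^3 + (690 - 110*j)*u^4 + (732 - 684*j)*u^5 + (210 + 1554*j)*u^6 + (-176 - 176*j)*u^7 + (-1998 - 270*j)*u^8 + (-1140 + 1220*j)*u^9 + (242 - 1518*j)*u^10 + (48 + 240*j)*u^11 + (286 - 130*j)*u^12 + (-28 - 84*j)*u^13 + (30 + 30*j)*u^14 + (-16 - 16*j)*u^15)"
definition qDyD :: "complex \<Rightarrow> complex \<Rightarrow> complex" where "qDyD j u = ((-4*j) + (-16 - 16*j)*u + 60*u^2 + (64 - 64*j)*u^3 + (-220*j)*u^4 + (48 + 48*j)*u^5 + 420*u^6 + (-540*j)*u^8 + (80 + 80*j)*u^9 + 484*u^10 + (-192 + 192*j)*u^11 + (-260*j)*u^12 + (-112 - 112*j)*u^13 + 60*u^14)"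
definition qNtD :: "complex \<Rightarrow> complex \<Rightarrow> complex" where "qNtD j u = (32*u + 304*u^3 + 288*u^5 + (-2256)*u^7 + 480*u^9 + 912*u^11 + 224*u^13 + 16*u^15)"
definition qDtD :: "complex \<Rightarrow> complex \<Rightarrow> complex" where "qDtD j u = (64*u + 576*u^5 + 960*u^9 + 448*u^13)"
definition qPND :: "complex \<Rightarrow> complex \<Rightarrow> complex" where "qPND j u = ((-j) + (-4 - 4*j)*u + 15*u^2 + (16 - 16*j)*u^3 + (-55*j)*u^4 + (12 + 12*j)*u^5 + 105*u^6 + (-135*j)*u^8 + (20 + 20*j)*u^9 + 121*u^10 + (-48 + 48*j)*u^11 + (-65*j)*u^12 + (-28 - 28*j)*u^13 + 15*u^14)"
definition qPDD :: "complex \<Rightarrow> complex \<Rightarrow> complex" where "qPDD j u = ((2 - 2*j) + (-8*j)*u + (6 + 6*j)*u^2 + (-144)*u^3 + (-350 + 350*j)*u^4 + (840*j)*u^5 + (-490 - 490*j)*u^6 + 560*u^7 + (630 - 630*j)*u^8 + (-1400*j)*u^9 + (770 + 770*j)*u^10 + (-432)*u^11 + (-26 + 26*j)*u^12 + (56*j)*u^13 + (-30 - 30*j)*u^14 + 16*u^15)"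

definition qNy :: "complex \<Rightarrow> complex \<Rightarrow> complex" where "qNy j u = -(1+j)*qa j u*qe1 j u*(qe2 j u)^2*qc j u"
definition qDy :: "complex \<Rightarrow> complex \<Rightarrow> complex" where "qDy j u = 4*u*qhp j u*(qhm j u)^2*qk j u*qd j u"
definition qNt :: "complex \<Rightarrow> complex \<Rightarrow> complex" where "qNt j u = (qa j u)^2*(qe1 j u)^3*(qe2 j u)^3"
definition qDt :: "complex \<Rightarrow> complex \<Rightarrow> complex" where "qDt j u = 32*u^2*(qhp j u)^3*(qhm j u)^3"
definition qPN :: "complex \<Rightarrow> complex \<Rightarrow> complex" where "qPN j u = u*qhp j u*(qhm j u)^2*qk j u*qd j u"
definition qPD :: "complex \<Rightarrow> complex \<Rightarrow> complex" where "qPD j u = qa j u*qe1 j u*(qe2 j u)^2*qcc j u*(qdm j u)^2*qdq j u"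

lemma L2: fixes j u :: complex assumes jj: "j^2 = -1" shows "qNy j u - qDy j u = qcc j u*(qdm j u)^2*qdq j u*qr8a j u"
  unfolding qNy_def qDy_def qNt_def qDt_def qPN_def qPD_def qa_def qe1_def qe2_def qc_def qhp_def qhm_def qk_def qd_def qcc_def qdm_def qdq_def qr8a_def qr8b_def qr26_def qr24_def qNyD_def qDyD_def qNtD_def qDtD_def qPND_def qPDD_def using jj by algebra
lemma L3: fixes j u :: complex assumes jj: "j^2 = -1" shows "8*u*(qhp j u)^2*qhm j u*qNy j u - qk j u*qd j u*qNt j u = qa j u*qe1 j u*(qe2 j u)^2*qcc j u*(qdm j u)^2*qdq j u*qr8b j u"
  unfolding qNy_def qDy_def qNt_def qDt_def qPN_def qPD_def qa_def qe1_def qe2_def qc_def qhp_def qhm_def qk_def qd_def qcc_def qdm_def qdq_def qr8a_def qr8b_def qr26_def qr24_def qNyD_def qDyD_def qNtD_def qDtD_def qPND_def qPDD_def using jj by algebra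
lemma L4: fixes j u :: complex assumes jj: "j^2 = -1" shows "qNt j u - qDt j u = (qcc j u)^2*(qdm j u)^3*(qdq j u)^3"
  unfolding qNy_def qDy_def qNt_def qDt_def qPN_def qPD_def qa_def qe1_def qe2_def qc_def qhp_def qhm_def qk_def qd_def qcc_def qdm_def qdq_def qr8a_def qr8b_def qr26_def qr24_def qNyD_def qDyD_def qNtD_def qDtD_def qPND_def qPDD_def using jj by algebra
lemma L5: fixes j u :: complex assumes jj: "j^2 = -1" shows "qNyD j u*qDy j u - qNy j u*qDyD j u = qe2 j u*qhm j u*qr26 j u"
  unfolding qNy_def qDy_def qNt_def qDt_def qPN_def qPD_def qa_def qe1_def qe2_def qc_def qhp_def qhm_def qk_def qd_def qcc_def qdm_def qdq_def qr8a_def qr8b_def qr26_def qr24_def qNyD_def qDyD_def qNtD_def qDtD_def qPND_def qPDD_def using jj by algebra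
lemma L6: fixes j u :: complex assumes jj: "j^2 = -1" shows "qNtD j u*qDt j u - qNt j u*qDtD j u = 64*qa j u*(qe1 j u)^2*(qe2 j u)^2*qcc j u*(qdm j u)^2*(qdq j u)^2*u*(qhp j u)^2*(qhm j u)^2"
  unfolding qNy_def qDy_def qNt_def qDt_def qPN_def qPD_def qa_def qe1_def qe2_def qc_def qhp_def qhm_def qk_def qd_def qcc_def qdm_def qdq_def qr8a_def qr8b_def qr26_def qr24_def qNyD_def qDyD_def qNtD_def qDtD_def qPND_def qPDD_def using jj by algebra
lemma L7: fixes j u :: complex assumes jj: "j^2 = -1" shows "qPND j u*qPD j u - qPN j u*qPDD j u = qe2 j u*qhm j u*qr24 j u"
  unfolding qNy_def qDy_def qNt_def qDt_def qPN_def qPD_def qa_def qe1_def qe2_def qc_def qhp_def qhm_def qk_def qd_def qcc_def qdm_def qdq_def qr8a_def qr8b_def qr26_def qr24_def qNyD_def qDyD_def qNtD_def qDtD_def qPND_def qPDD_def using jj by algebra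
lemma coreA: fixes j u :: complex assumes jj: "j^2 = -1" shows "qr26 j u = 4*(qc j u)*(qdm j u)*(qr8a j u)*(qr8b j u) + (-4)*(qcc j u)*(qdm j u)^3*(qdq j u)*(qr8a j u)*(qr8b j u) + (4 + 4*j)*(qa j u)*(qe1 j u)*(qe2 j u)^2*(qc j u)*(qdm j u)*(qr8b j u) + (-32 - 32*j)*u*(qc j u)*(qhp j u)^2*(qhm j u)*(qdm j u)*(qr8a j u)"
  unfolding qNy_def qDy_def qNt_def qDt_def qPN_def qPD_def qa_def qe1_def qe2_def qc_def qhp_def qhm_def qk_def qd_def qcc_def qdm_def qdq_def qr8a_def qr8b_def qr26_def qr24_def qNyD_def qDyD_def qNtD_def qDtD_def qPND_def qPDD_def using jj by algebra
lemma coreB4: fixes j u :: complex assumes jj: "j^2 = -1" shows "4 * qr24 j u = (-16)*u*(qc j u)*(qhp j u)^2*(qhm j u)*(qdm j u)*(qr8a j u) + (-2)*(qa j u)*(qe1 j u)*(qe2 j u)^2*(qc j u)*(qdm j u)*(qr8b j u) + (1 - 1*j)*(qcc j u)*(qdm j u)^3*(qdq j u)*(qr8a j u)*(qr8b j u) + 8*(qa j u)*(qe1 j u)*(qe2 j u)^2*(qcc j u)*(qdm j u)^3*(qdq j u)*(qr8b j u) + (12 + 12*j)*u*(qa j u)*(qe1 j u)*(qe2 j u)^2*(qhp j u)^2*(qhm j u)*(qcc j u)*(qdm j u)^3*(qdq j u)"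
  unfolding qNy_def qDy_def qNt_def qDt_def qPN_def qPD_def qa_def qe1_def qe2_def qc_def qhp_def qhm_def qk_def qd_def qcc_def qdm_def qdq_def qr8a_def qr8b_def qr26_def qr24_def qNyD_def qDyD_def qNtD_def qDtD_def qPND_def qPDD_def using jj by algebra
lemma coreB: fixes j u :: complex assumes jj: "j^2 = -1" shows "qr24 j u = (-4)*u*(qc j u)*(qhp j u)^2*(qhm j u)*(qdm j u)*(qr8a j u) + (-1)/2*(qa j u)*(qe1 j u)*(qe2 j u)^2*(qc j u)*(qdm j u)*(qr8b j u) + (1 - 1*j)/4*(qcc j u)*(qdm j u)^3*(qdq j u)*(qr8a j u)*(qr8b j u) + 2*(qa j u)*(qe1 j u)*(qe2 j u)^2*(qcc j u)*(qdm j u)^3*(qdq j u)*(qr8b j u) + (3 + 3*j)*u*(qa j u)*(qe1 j u)*(qe2 j u)^2*(qhp j u)^2*(qhm j u)*(qcc j u)*(qdm j u)^3*(qdq j u)"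
  using coreB4[OF jj, of u] by algebra
lemma DNy: fixes j u :: complex assumes jj: "j^2 = -1" shows "((\<lambda>u. qNy j u) has_field_derivative qNyD j u) (at u)"
  unfolding qNy_def qDy_def qNt_def qDt_def qPN_def qPD_def qa_def qe1_def qe2_def qc_def qhp_def qhm_def qk_def qd_def qcc_def qdm_def qdq_def qr8a_def qr8b_def qr26_def qr24_def qNyD_def
  apply (rule derivative_eq_intros refl | simp only: )+
  apply simp
  using jj by algebra
lemma DDy: fixes j u :: complex assumes jj: "j^2 = -1" shows "((\<lambda>u. qDy j u) has_field_derivative qDyD j u) (at u)"
  unfolding qNy_def qDy_def qNt_def qDt_def qPN_def qPD_def qa_def qe1_def qe2_def qc_def qhp_def qhm_def qk_def qd_def qcc_def qdm_def qdq_def qr8a_def qr8b_def qr26_def qr24_def qDyD_def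
  apply (rule derivative_eq_intros refl | simp only: )+
  apply simp
  using jj by algebra
lemma DNt: fixes j u :: complex assumes jj: "j^2 = -1" shows "((\<lambda>u. qNt j u) has_field_derivative qNtD j u) (at u)"
  unfolding qNy_def qDy_def qNt_def qDt_def qPN_def qPD_def qa_def qe1_def qe2_def qc_def qhp_def qhm_def qk_def qd_def qcc_def qdm_def qdq_def qr8a_def qr8b_def qr26_def qr24_def qNtD_def
  apply (rule derivative_eq_intros refl | simp only: )+
  apply simp
  using jj by algebra
lemma DDt: fixes j u :: complex assumes jj: "j^2 = -1" shows "((\<lambda>u. qDt j u) has_field_derivative qDtD j u) (at u)"
  unfolding qNy_def qDy_def qNt_def qDt_def qPN_def qPD_def qa_def qe1_def qe2_def qc_def qhp_def qhm_def qk_def qd_def qcc_def qdm_def qdq_def qr8a_def qr8b_def qr26_def qr24_def qDtD_def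
  apply (rule derivative_eq_intros refl | simp only: )+
  apply simp
  using jj by algebra
lemma DPN: fixes j u :: complex assumes jj: "j^2 = -1" shows "((\<lambda>u. qPN j u) has_field_derivative qPND j u) (at u)"
  unfolding qNy_def qDy_def qNt_def qDt_def qPN_def qPD_def qa_def qe1_def qe2_def qc_def qhp_def qhm_def qk_def qd_def qcc_def qdm_def qdq_def qr8a_def qr8b_def qr26_def qr24_def qPND_def
  apply (rule derivative_eq_intros refl | simp only: )+
  apply simp
  using jj by algebra
lemma DPD: fixes j u :: complex assumes jj: "j^2 = -1" shows "((\<lambda>u. qPD j u) has_field_derivative qPDD j u) (at u)"
  unfolding qNy_def qDy_def qNt_def qDt_def qPN_def qPD_def qa_def qe1_def qe2_def qc_def qhp_def qhm_def qk_def qd_def qcc_def qdm_def qdq_def qr8a_def qr8b_def qr26_def qr24_def qPDD_def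
  apply (rule derivative_eq_intros refl | simp only: )+
  apply simp
  using jj by algebra

lemma LkNt: fixes j u :: complex assumes jj: "j^2 = -1" shows "(u ^ 2 - 1) ^ 2 * (u ^ 4 + 6 * u ^ 2 + 1) ^ 3 = qNt j u"
  unfolding qNt_def qa_def qe1_def qe2_def using jj by algebra
lemma LkDt: fixes j u :: complex assumes jj: "j^2 = -1" shows "32 * u ^ 2 * (u ^ 4 + 1) ^ 3 = qDt j u"
  unfolding qDt_def qhp_def qhm_def using jj by algebra
lemma LkNy: fixes j u :: complex shows "-((1 + j) * (u ^ 2 - 1) * (u ^ 2 + 2 * j * u + 1) * (u ^ 2 - 2 * j * u + 1) ^ 2 * qc j u) = qNy j u"
  unfolding qNy_def qa_def qe1_def qe2_def by algebra

lemma cpoly_eq: "cpoly u = qc \<i> u" unfolding cpoly_def qc_def ..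
lemma yden_eq: "yden u = qDy \<i> u" unfolding yden_def qDy_def qhp_def qhm_def qk_def qd_def dpoly_def ..
lemma tden_eq: "tden u = qDt \<i> u" unfolding tden_def LkDt[OF ii] ..
lemma tfun_eq: "tfun u = qNt \<i> u / qDt \<i> u" unfolding tfun_def tden_eq LkNt[OF ii] ..
lemma yfun_eq: "yfun u = qNy \<i> u / qDy \<i> u" unfolding yfun_def yden_eq cpoly_eq LkNy ..

definition pfun :: "complex \<Rightarrow> complex" where "pfun u = (-1+\<i>)/2 * (qPN \<i> u / qPD \<i> u)"
definition TdF :: "complex \<Rightarrow> complex" where "TdF u = (qNtD \<i> u * qDt \<i> u - qNt \<i> u * qDtD \<i> u) / (qDt \<i> u * qDt \<i> u)"
definition YdF :: "complex \<Rightarrow> complex" where "YdF u = (qNyD \<i> u * qDy \<i> u - qNy \<i> u * qDyD \<i> u) / (qDy \<i> u * qDy \<i> u)"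
definition PdF :: "complex \<Rightarrow> complex" where "PdF u = (-1+\<i>)/2 * ((qPND \<i> u * qPD \<i> u - qPN \<i> u * qPDD \<i> u) / (qPD \<i> u * qPD \<i> u))"

lemma dT: assumes "qDt \<i> u \<noteq> 0" shows "(tfun has_field_derivative TdF u) (at u)"
proof -
  have e: "tfun = (\<lambda>u. qNt \<i> u / qDt \<i> u)" using tfun_eq by (rule ext)
  show ?thesis unfolding e TdF_def by (rule DERIV_divide[OF DNt[OF ii] DDt[OF ii] assms])
qed
lemma dY: assumes "qDy \<i> u \<noteq> 0" shows "(yfun has_field_derivative YdF u) (at u)"
proof -
  have e: "yfun = (\<lambda>u. qNy \<i> u / qDy \<i> u)" using yfun_eq by (rule ext)
  show ?thesis unfolding e YdF_def by (rule DERIV_divide[OF DNy[OF ii] DDy[OF ii] assms])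
qed
lemma dP: assumes "qPD \<i> u \<noteq> 0" shows "(pfun has_field_derivative PdF u) (at u)"
proof -
  have e: "pfun = (\<lambda>u. (-1+\<i>)/2 * (qPN \<i> u / qPD \<i> u))" using pfun_def by (intro ext) simp
  show ?thesis unfolding e PdF_def by (rule DERIV_cmult[OF DERIV_divide[OF DPN[OF ii] DPD[OF ii] assms]])
qed

lemma genA:
  fixes u a e1 e2 c hp hm k d cc dm dq r8a r8b r26 Y Ym1 YmT T Tm1 Td Yd Pv Pd j :: complex
  assumes nz: "u\<noteq>0" "hp\<noteq>0" "hm\<noteq>0" "k\<noteq>0" "d\<noteq>0" "a\<noteq>0" "e1\<noteq>0" "e2\<noteq>0" "cc\<noteq>0" "dm\<noteq>0" "dq\<noteq>0"
  and jj: "j^2 = -1"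
  and core: "r26 = 4*c*dm*r8a*r8b + (-4)*cc*dm^3*dq*r8a*r8b + (4 + 4*j)*a*e1*e2^2*c*dm*r8b + (-32 - 32*j)*u*c*hp^2*hm*dm*r8a"
  and Y: "Y = -(1+j)*a*e1*e2^2*c/(4*u*hp*hm^2*k*d)"
  and Ym1: "Ym1 = cc*dm^2*dq*r8a/(4*u*hp*hm^2*k*d)"
  and T: "T = a^2*e1^3*e2^3/(32*u^2*hp^3*hm^3)"
  and Tm1: "Tm1 = cc^2*dm^3*dq^3/(32*u^2*hp^3*hm^3)"
  and YmT: "YmT = 4*u*hp*hm^2*(a*e1*e2^2*cc*dm^2*dq*r8b)/((4*u*hp*hm^2*k*d)*(32*u^2*hp^3*hm^3))"
  and Td: "Td = 64*a*e1^2*e2^2*cc*dm^2*dq^2*u*hp^2*hm^2/((32*u^2*hp^3*hm^3)*(32*u^2*hp^3*hm^3))"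
  and Yd: "Yd = e2*hm*r26/((4*u*hp*hm^2*k*d)*(4*u*hp*hm^2*k*d))"
  and Pv: "Pv = (-1+j)/2 * (u*hp*hm^2*k*d/(a*e1*e2^2*cc*dm^2*dq))"
  shows "T*Tm1*Yd = Td*(2*Y*Ym1*YmT*Pv - (1/2*Ym1*YmT + 1/2*Y*YmT - 1/2*Y*Ym1))"
  unfolding Y Ym1 T Tm1 YmT Td Yd Pv core
  apply (simp add: field_simps nz)
  using jj by algebra

lemma genB:
  fixes u a e1 e2 c hp hm k d cc dm dq r8a r8b r24 Y Ym1 YmT T Tm1 Td Yd Pv Pd j :: complex
  assumes nz: "u\<noteq>0" "hp\<noteq>0" "hm\<noteq>0" "k\<noteq>0" "d\<noteq>0" "a\<noteq>0" "e1\<noteq>0" "e2\<noteq>0" "cc\<noteq>0" "dm\<noteq>0" "dq\<noteq>0"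
  and jj: "j^2 = -1"
  and core: "r24 = (-4)*u*c*hp^2*hm*dm*r8a + (-1)/2*a*e1*e2^2*c*dm*r8b + (1 - 1*j)/4*cc*dm^3*dq*r8a*r8b + 2*a*e1*e2^2*cc*dm^3*dq*r8b + (3 + 3*j)*u*a*e1*e2^2*hp^2*hm*cc*dm^3*dq"
  and Y: "Y = -(1+j)*a*e1*e2^2*c/(4*u*hp*hm^2*k*d)"
  and Ym1: "Ym1 = cc*dm^2*dq*r8a/(4*u*hp*hm^2*k*d)"
  and T: "T = a^2*e1^3*e2^3/(32*u^2*hp^3*hm^3)"
  and Tm1: "Tm1 = cc^2*dm^3*dq^3/(32*u^2*hp^3*hm^3)"
  and YmT: "YmT = 4*u*hp*hm^2*(a*e1*e2^2*cc*dm^2*dq*r8b)/((4*u*hp*hm^2*k*d)*(32*u^2*hp^3*hm^3))"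
  and Td: "Td = 64*a*e1^2*e2^2*cc*dm^2*dq^2*u*hp^2*hm^2/((32*u^2*hp^3*hm^3)*(32*u^2*hp^3*hm^3))"
  and Pv: "Pv = (-1+j)/2 * (u*hp*hm^2*k*d/(a*e1*e2^2*cc*dm^2*dq))"
  and Pd: "Pd = (-1+j)/2 * (e2*hm*r24/((a*e1*e2^2*cc*dm^2*dq)*(a*e1*e2^2*cc*dm^2*dq)))"
  shows "T*Tm1*Pd = Td*(-(Y*Ym1 + Y*YmT + Ym1*YmT)*Pv^2 + (1/2*(Ym1+YmT) + 1/2*(Y+YmT) + (1/2-1)*(Y+Ym1))*Pv - 3/64)"
  unfolding Y Ym1 T Tm1 YmT Td Pv Pd core
  apply (simp add: field_simps nz)
  using jj by algebra


lemma nzDy: assumes "qDy \<i> u \<noteq> 0" shows "u\<noteq>0" "qhp \<i> u\<noteq>0" "qhm \<i> u\<noteq>0" "qk \<i> u\<noteq>0" "qd \<i> u\<noteq>0"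
  using assms by (simp_all add: qDy_def)
lemma nzPD: assumes "qPD \<i> u \<noteq> 0" shows "qa \<i> u\<noteq>0" "qe1 \<i> u\<noteq>0" "qe2 \<i> u\<noteq>0" "qcc \<i> u\<noteq>0" "qdm \<i> u\<noteq>0" "qdq \<i> u\<noteq>0"
  using assms by (simp_all add: qPD_def)

lemma factT: assumes "qDt \<i> u \<noteq> 0"
  shows "tfun u = (qa \<i> u)^2*(qe1 \<i> u)^3*(qe2 \<i> u)^3/(32*u^2*(qhp \<i> u)^3*(qhm \<i> u)^3)" "tfun u - 1 = (qcc \<i> u)^2*(qdm \<i> u)^3*(qdq \<i> u)^3/(32*u^2*(qhp \<i> u)^3*(qhm \<i> u)^3)" "TdF u = 64*(qa \<i> u)*(qe1 \<i> u)^2*(qe2 \<i> u)^2*(qcc \<i> u)*(qdm \<i> u)^2*(qdq \<i> u)^2*u*(qhp \<i> u)^2*(qhm \<i> u)^2/((32*u^2*(qhp \<i> u)^3*(qhm \<i> u)^3)*(32*u^2*(qhp \<i> u)^3*(qhm \<i> u)^3))"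
proof -
  show "tfun u = (qa \<i> u)^2*(qe1 \<i> u)^3*(qe2 \<i> u)^3/(32*u^2*(qhp \<i> u)^3*(qhm \<i> u)^3)" by (simp only: tfun_eq qNt_def qDt_def)
  have "tfun u - 1 = (qNt \<i> u - qDt \<i> u) / qDt \<i> u" using assms by (simp add: tfun_eq diff_divide_distrib)
  then have "tfun u - 1 = (qcc \<i> u)^2*(qdm \<i> u)^3*(qdq \<i> u)^3 / qDt \<i> u" by (simp only: L4[OF ii])
  then show "tfun u - 1 = (qcc \<i> u)^2*(qdm \<i> u)^3*(qdq \<i> u)^3/(32*u^2*(qhp \<i> u)^3*(qhm \<i> u)^3)" by (simp only: qDt_def)
  have "TdF u = 64*qa \<i> u*(qe1 \<i> u)^2*(qe2 \<i> u)^2*qcc \<i> u*(qdm \<i> u)^2*(qdq \<i> u)^2*u*(qhp \<i> u)^2*(qhm \<i> u)^2 / (qDt \<i> u * qDt \<i> u)" by (simp only: TdF_def L6[OF ii])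
  then show "TdF u = 64*(qa \<i> u)*(qe1 \<i> u)^2*(qe2 \<i> u)^2*(qcc \<i> u)*(qdm \<i> u)^2*(qdq \<i> u)^2*u*(qhp \<i> u)^2*(qhm \<i> u)^2/((32*u^2*(qhp \<i> u)^3*(qhm \<i> u)^3)*(32*u^2*(qhp \<i> u)^3*(qhm \<i> u)^3))" by (simp only: qDt_def)
qed

lemma factY: assumes "qDy \<i> u \<noteq> 0" "qDt \<i> u \<noteq> 0"
  shows "yfun u = -(1+\<i>)*(qa \<i> u)*(qe1 \<i> u)*(qe2 \<i> u)^2*(qc \<i> u)/(4*u*(qhp \<i> u)*(qhm \<i> u)^2*(qk \<i> u)*(qd \<i> u))" "yfun u - 1 = (qcc \<i> u)*(qdm \<i> u)^2*(qdq \<i> u)*(qr8a \<i> u)/(4*u*(qhp \<i> u)*(qhm \<i> u)^2*(qk \<i> u)*(qd \<i> u))" "yfun u - tfun u = 4*u*(qhp \<i> u)*(qhm \<i> u)^2*((qa \<i> u)*(qe1 \<i> u)*(qe2 \<i> u)^2*(qcc \<i> u)*(qdm \<i> u)^2*(qdq \<i> u)*(qr8b \<i> u))/((4*u*(qhp \<i> u)*(qhm \<i> u)^2*(qk \<i> u)*(qd \<i> u))*(32*u^2*(qhp \<i> u)^3*(qhm \<i> u)^3))" "YdF u = (qe2 \<i> u)*(qhm \<i> u)*(qr26 \<i> u)/((4*u*(qhp \<i> u)*(qhm \<i> u)^2*(qk \<i> u)*(qd \<i> u))*(4*u*(qhp \<i> u)*(qhm \<i> u)^2*(qk \<i> u)*(qd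 \<i> u)))"
proof -
  show "yfun u = -(1+\<i>)*(qa \<i> u)*(qe1 \<i> u)*(qe2 \<i> u)^2*(qc \<i> u)/(4*u*(qhp \<i> u)*(qhm \<i> u)^2*(qk \<i> u)*(qd \<i> u))" by (simp only: yfun_eq qNy_def qDy_def)
  have "yfun u - 1 = (qNy \<i> u - qDy \<i> u) / qDy \<i> u" using assms by (simp add: yfun_eq diff_divide_distrib)
  then have "yfun u - 1 = qcc \<i> u*(qdm \<i> u)^2*qdq \<i> u*qr8a \<i> u / qDy \<i> u" by (simp only: L2[OF ii])
  then show "yfun u - 1 = (qcc \<i> u)*(qdm \<i> u)^2*(qdq \<i> u)*(qr8a \<i> u)/(4*u*(qhp \<i> u)*(qhm \<i> u)^2*(qk \<i> u)*(qd \<i> u))" by (simp only: qDy_def)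
  have "yfun u - tfun u = (qNy \<i> u * qDt \<i> u - qNt \<i> u * qDy \<i> u) / (qDy \<i> u * qDt \<i> u)"
    using assms by (simp add: yfun_eq tfun_eq diff_frac_eq)
  also have "qNy \<i> u * qDt \<i> u - qNt \<i> u * qDy \<i> u = 4*u*qhp \<i> u*(qhm \<i> u)^2*(8*u*(qhp \<i> u)^2*qhm \<i> u*qNy \<i> u - qk \<i> u*qd \<i> u*qNt \<i> u)"
    unfolding qDt_def qDy_def by algebra
  finally show "yfun u - tfun u = 4*u*(qhp \<i> u)*(qhm \<i> u)^2*((qa \<i> u)*(qe1 \<i> u)*(qe2 \<i> u)^2*(qcc \<i> u)*(qdm \<i> u)^2*(qdq \<i> u)*(qr8b \<i> u))/((4*u*(qhp \<i> u)*(qhm \<i> u)^2*(qk \<i> u)*(qd \<i> u))*(32*u^2*(qhp \<i> u)^3*(qhm \<i> u)^3))" by (simp only: L3[OF ii] qDy_def qDt_def)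
  have "YdF u = qe2 \<i> u*qhm \<i> u*qr26 \<i> u / (qDy \<i> u * qDy \<i> u)" by (simp only: YdF_def L5[OF ii])
  then show "YdF u = (qe2 \<i> u)*(qhm \<i> u)*(qr26 \<i> u)/((4*u*(qhp \<i> u)*(qhm \<i> u)^2*(qk \<i> u)*(qd \<i> u))*(4*u*(qhp \<i> u)*(qhm \<i> u)^2*(qk \<i> u)*(qd \<i> u)))" by (simp only: qDy_def)
qed

lemma factP: assumes "qPD \<i> u \<noteq> 0"
  shows "pfun u = (-1+\<i>)/2 * (u*(qhp \<i> u)*(qhm \<i> u)^2*(qk \<i> u)*(qd \<i> u)/((qa \<i> u)*(qe1 \<i> u)*(qe2 \<i> u)^2*(qcc \<i> u)*(qdm \<i> u)^2*(qdq \<i> u)))" "PdF u = (-1+\<i>)/2 * ((qe2 \<i> u)*(qhm \<i> u)*(qr24 \<i> u)/(((qa \<i> u)*(qe1 \<i> u)*(qe2 \<i> u)^2*(qcc \<i> u)*(qdm \<i> u)^2*(qdq \<i> u))*((qa \<i> u)*(qe1 \<i> u)*(qe2 \<i> u)^2*(qcc \<i> u)*(qdm \<i> u)^2*(qdq \<i> u))))"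
proof -
  show "pfun u = (-1+\<i>)/2 * (u*(qhp \<i> u)*(qhm \<i> u)^2*(qk \<i> u)*(qd \<i> u)/((qa \<i> u)*(qe1 \<i> u)*(qe2 \<i> u)^2*(qcc \<i> u)*(qdm \<i> u)^2*(qdq \<i> u)))" by (simp only: pfun_def qPN_def qPD_def)
  have "PdF u = (-1+\<i>)/2 * (qe2 \<i> u*qhm \<i> u*qr24 \<i> u / (qPD \<i> u * qPD \<i> u))" by (simp only: PdF_def L7[OF ii])
  then show "PdF u = (-1+\<i>)/2 * ((qe2 \<i> u)*(qhm \<i> u)*(qr24 \<i> u)/(((qa \<i> u)*(qe1 \<i> u)*(qe2 \<i> u)^2*(qcc \<i> u)*(qdm \<i> u)^2*(qdq \<i> u))*((qa \<i> u)*(qe1 \<i> u)*(qe2 \<i> u)^2*(qcc \<i> u)*(qdm \<i> u)^2*(qdq \<i> u))))" by (simp only: qPD_def)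
qed

lemma hAB: assumes "qDy \<i> u \<noteq> 0" "qDt \<i> u \<noteq> 0" "qPD \<i> u \<noteq> 0"
  shows "tfun u * (tfun u - 1) * YdF u = TdF u * (2*yfun u*(yfun u - 1)*(yfun u - tfun u)*pfun u - (1/2*(yfun u - 1)*(yfun u - tfun u) + 1/2*yfun u*(yfun u - tfun u) - 1/2*yfun u*(yfun u - 1)))"
    and "tfun u * (tfun u - 1) * PdF u = TdF u * (-(yfun u*(yfun u - 1) + yfun u*(yfun u - tfun u) + (yfun u - 1)*(yfun u - tfun u))*(pfun u)^2 + (1/2*((yfun u - 1)+(yfun u - tfun u)) + 1/2*(yfun u+(yfun u - tfun u)) + (1/2-1)*(yfun u+(yfun u - 1)))*pfun u - 3/64)"
proof -
  note nz = nzDy[OF assms(1)] nzPD[OF assms(3)]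
  note fT = factT[OF assms(2)] and fY = factY[OF assms(1,2)] and fP = factP[OF assms(3)]
  show "tfun u * (tfun u - 1) * YdF u = TdF u * (2*yfun u*(yfun u - 1)*(yfun u - tfun u)*pfun u - (1/2*(yfun u - 1)*(yfun u - tfun u) + 1/2*yfun u*(yfun u - tfun u) - 1/2*yfun u*(yfun u - 1)))"
    by (rule genA[OF nz ii coreA[OF ii] fY(1) fY(2) fT(1) fT(2) fY(3) fT(3) fY(4) fP(1)])
  show "tfun u * (tfun u - 1) * PdF u = TdF u * (-(yfun u*(yfun u - 1) + yfun u*(yfun u - tfun u) + (yfun u - 1)*(yfun u - tfun u))*(pfun u)^2 + (1/2*((yfun u - 1)+(yfun u - tfun u)) + 1/2*(yfun u+(yfun u - tfun u)) + (1/2-1)*(yfun u+(yfun u - 1)))*pfun u - 3/64)"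
    by (rule genB[OF nz ii coreB[OF ii] fY(1) fY(2) fT(1) fT(2) fY(3) fT(3) fP(1) fP(2)])
qed

definition phiG :: "complex \<Rightarrow> complex \<Rightarrow> complex \<Rightarrow> complex" where
  "phiG T Y P = (2*Y*(Y-1)*(Y-T)*P - (1/2*(Y-1)*(Y-T) + 1/2*Y*(Y-T) - 1/2*Y*(Y-1)))/(T*(T-1))"

definition dphiG :: "complex \<Rightarrow> complex \<Rightarrow> complex \<Rightarrow> complex \<Rightarrow> complex \<Rightarrow> complex \<Rightarrow> complex" where
  "dphiG T Y P Td Yd Pd =
    ((2*(Yd*(Y-1)*(Y-T)*P + Y*Yd*(Y-T)*P + Y*(Y-1)*(Yd-Td)*P + Y*(Y-1)*(Y-T)*Pd)
      - (1/2*(Yd*(Y-T) + (Y-1)*(Yd-Td)) + 1/2*(Yd*(Y-T) + Y*(Yd-Td)) - 1/2*(Yd*(Y-1) + Y*Yd))) * (T*(T-1))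
     - (2*Y*(Y-1)*(Y-T)*P - (1/2*(Y-1)*(Y-T) + 1/2*Y*(Y-T) - 1/2*Y*(Y-1))) * (Td*(T-1) + T*Td))
    / ((T*(T-1))*(T*(T-1)))"

lemma chainG:
  assumes f: "(f has_field_derivative Td) (at s)" and g: "(g has_field_derivative Yd) (at s)"
    and h: "(h has_field_derivative Pd) (at s)" and nz: "f s \<noteq> 0" "f s \<noteq> 1"
  shows "((\<lambda>u. phiG (f u) (g u) (h u)) has_field_derivative dphiG (f s) (g s) (h s) Td Yd Pd) (at s)"
  unfolding phiG_def dphiG_def
  apply (rule derivative_eq_intros f g h refl | simp only: )+
  using nz apply simp
  apply (rule arg_cong[where f="\<lambda>x. x / ((f s*(f s-1))*(f s*(f s-1)))"])
  by algebra


lemma dphiG_lin: "dphiG T Y P Td Yd Pd =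
   ((Yd*(2*(Y*(Y-1) + Y*(Y-T) + (Y-1)*(Y-T))*P - (1/2*((Y-1)+(Y-T)) + 1/2*(Y+(Y-T)) + (1/2-1)*(Y+(Y-1))))
     + Td*(2*(-(Y*(Y-1)))*P - (-(1/2*(Y-1) + 1/2*Y))) + 2*(Y*(Y-1)*(Y-T))*Pd)*(T*(T-1))
    - (2*(Y*(Y-1)*(Y-T))*P - (1/2*(Y-1)*(Y-T) + 1/2*Y*(Y-T) - 1/2*Y*(Y-1)))*(Td*(2*T-1))) / ((T*(T-1))*(T*(T-1)))"
  unfolding dphiG_def
  by (rule arg_cong[where f="\<lambda>x. x / ((T*(T-1))*(T*(T-1)))"]) algebra

lemma Estep:
  fixes Q D QY QT L S ST K F T P Td Yd Pd :: complex
  assumes nz: "Q \<noteq> 0" "D \<noteq> 0" "Td \<noteq> 0"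
    and P: "P = (D*F + S)/(2*Q)" and Yd: "Yd = Td*F" and Pd: "Pd = Td*(-QY*P^2 + L*P - K)/D"
  shows "((Yd*(2*QY*P - L) + Td*(2*QT*P - ST) + 2*Q*Pd)*D - (2*Q*P - S)*(Td*(2*T-1)))/(D*D)/Td
     = QY/(2*Q)*F^2 + (QT/Q - (2*T-1)/D)*F + (-QY*S^2/(2*Q*D) + L*S/D + QT*S/Q - ST - 2*Q*K/D)/D"
  unfolding Pd Yd P using nz
  apply (simp add: field_simps)
  by algebra

lemma A0poly:
  fixes T Y :: complex
  shows "-(Y*(Y-1) + Y*(Y-T) + (Y-1)*(Y-T))*(1/2*(Y-1)*(Y-T) + 1/2*Y*(Y-T) - 1/2*Y*(Y-1))^2
     + 2*(Y*(Y-1)*(Y-T))*(1/2*((Y-1)+(Y-T)) + 1/2*(Y+(Y-T)) + (1/2-1)*(Y+(Y-1)))*(1/2*(Y-1)*(Y-T) + 1/2*Y*(Y-T) - 1/2*Y*(Y-1))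
     + 2*(-(Y*(Y-1)))*(1/2*(Y-1)*(Y-T) + 1/2*Y*(Y-T) - 1/2*Y*(Y-1))*(T*(T-1))
     - 2*(-(1/2*(Y-1) + 1/2*Y))*(Y*(Y-1)*(Y-T))*(T*(T-1))
     - 4*(Y*(Y-1)*(Y-T))^2*(3/64)
   = 2*(1/32*(Y*(Y-1)*(Y-T))^2 - 1/8*T*(Y-1)^2*(Y-T)^2 + 1/8*(T-1)*Y^2*(Y-T)^2 + 3/8*T*(T-1)*Y^2*(Y-1)^2)"
  by algebra

lemma A0frac:
  fixes Q D QY QT L S ST K :: complex
  assumes "Q \<noteq> 0" "D \<noteq> 0"
  shows "(-QY*S^2/(2*Q*D) + L*S/D + QT*S/Q - ST - 2*Q*K/D)/D = (-QY*S^2 + 2*Q*L*S + 2*QT*S*D - 2*ST*Q*D - 4*Q^2*K)/(2*Q*D^2)"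
  using assms by (simp add: field_simps power2_eq_square)

lemma C0:
  fixes y0 y1 y2 t0 t1 :: complex
  assumes "y0 \<noteq> 0" "y1 \<noteq> 0" "y2 \<noteq> 0" "t0 \<noteq> 0" "t1 \<noteq> 0"
  shows "2*(1/32*(y0*y1*y2)^2 - 1/8*t0*y1^2*y2^2 + 1/8*t1*y0^2*y2^2 + 3/8*t0*t1*y0^2*y1^2)/(2*(y0*y1*y2)*(t0*t1)^2)
       = y0*y1*y2/(t0^2*t1^2)*(1/32 + -1/8*t0/y0^2 + 1/8*t1/y1^2 + 3/8*t0*t1/y2^2)"
  using assms apply (simp add: field_simps)
  by algebra

lemma quadcomb: fixes a2 a1 a0 c2 c1 c0 F :: complex
  shows "a2 = c2 \<Longrightarrow> a1 = -c1 \<Longrightarrow> a0 = c0 \<Longrightarrow> a2*F^2 + a1*F + a0 = c2*F^2 - c1*F + c0"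
  by simp

lemma pvals: "pvi_alpha (3/4) = 1/32" "pvi_beta (1/2) = -1/8" "pvi_gamma (1/2) = 1/8" "pvi_delta (1/2) = 3/8"
  by (simp_all add: pvi_alpha_def pvi_beta_def pvi_gamma_def pvi_delta_def power2_eq_square)

lemma genH:
  fixes T Y P Td Yd Pd :: complex
  assumes nz: "T \<noteq> 0" "T \<noteq> 1" "Y \<noteq> 0" "Y \<noteq> 1" "Y \<noteq> T" "Td \<noteq> 0"
  and hA: "T*(T-1)*Yd = Td*(2*Y*(Y-1)*(Y-T)*P - (1/2*(Y-1)*(Y-T) + 1/2*Y*(Y-T) - 1/2*Y*(Y-1)))"
  and hB: "T*(T-1)*Pd = Td*(-(Y*(Y-1) + Y*(Y-T) + (Y-1)*(Y-T))*P^2 + (1/2*((Y-1)+(Y-T)) + 1/2*(Y+(Y-T)) + (1/2-1)*(Y+(Y-1)))*P - 3/64)"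
  shows "dphiG T Y P Td Yd Pd / Td = pvi_rhs (1/2) (1/2) (1/2) (3/4) T Y (Yd/Td)"
proof -
  have t1: "T - 1 \<noteq> 0" "Y - 1 \<noteq> 0" "Y - T \<noteq> 0" using nz by auto
  define F where "F = Yd/Td"
  have Yd: "Yd = Td*F" using nz(6) by (simp add: F_def)
  have Q0: "(Y*(Y-1)*(Y-T)) \<noteq> 0" using nz t1 by simp
  have D0: "(T*(T-1)) \<noteq> 0" using nz t1 by simp
  have "Td*(P*(2*(Y*(Y-1)*(Y-T)))) = Td*((T*(T-1))*F + (1/2*(Y-1)*(Y-T) + 1/2*Y*(Y-T) - 1/2*Y*(Y-1)))" using hA unfolding Yd by algebra
  then have "P*(2*(Y*(Y-1)*(Y-T))) = (T*(T-1))*F + (1/2*(Y-1)*(Y-T) + 1/2*Y*(Y-T) - 1/2*Y*(Y-1))" using nz(6) by simp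
  then have Pe: "P = ((T*(T-1))*F + (1/2*(Y-1)*(Y-T) + 1/2*Y*(Y-T) - 1/2*Y*(Y-1)))/(2*(Y*(Y-1)*(Y-T)))" using Q0 by (simp add: eq_divide_eq)
  have Pd': "Pd = Td*(-(Y*(Y-1) + Y*(Y-T) + (Y-1)*(Y-T))*P^2 + (1/2*((Y-1)+(Y-T)) + 1/2*(Y+(Y-T)) + (1/2-1)*(Y+(Y-1)))*P - 3/64)/(T*(T-1))"
    using D0 hB by (simp add: eq_divide_eq mult.commute)
  have E: "dphiG T Y P Td Yd Pd / Td = (Y*(Y-1) + Y*(Y-T) + (Y-1)*(Y-T))/(2*(Y*(Y-1)*(Y-T)))*F^2 + ((-(Y*(Y-1)))/(Y*(Y-1)*(Y-T)) - (2*T-1)/(T*(T-1)))*F + (-(Y*(Y-1) + Y*(Y-T) + (Y-1)*(Y-T))*(1/2*(Y-1)*(Y-T) + 1/2*Y*(Y-T) - 1/2*Y*(Y-1))^2/(2*(Y*(Y-1)*(Y-T))*(T*(T-1))) + (1/2*((Y-1)+(Y-T)) + 1/2*(Y+(Y-T)) + (1/2-1)*(Y+(Y-1)))*(1/2*(Y-1)*(Y-T) + 1/2*Y*(Y-T) - 1/2*Y*(Y-1))/(T*(T-1)) + (-(Y*(Y-1)))*(1/2*(Y-1)*(Y-T) + 1/2*Y*(Y-T) - 1/2*Y*(Y-1))/(Y*(Y-1)*(Y-T)) - (-(1/2*(Y-1) + 1/2*Y)) - 2*(Y*(Y-1)*(Y-T))*(3/64)/(T*(T-1)))/(T*(T-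1))"
    unfolding dphiG_lin
    by (rule Estep[of "(Y*(Y-1)*(Y-T))" "(T*(T-1))" Td P F "(1/2*(Y-1)*(Y-T) + 1/2*Y*(Y-T) - 1/2*Y*(Y-1))" Yd Pd "(Y*(Y-1) + Y*(Y-T) + (Y-1)*(Y-T))" "(1/2*((Y-1)+(Y-T)) + 1/2*(Y+(Y-T)) + (1/2-1)*(Y+(Y-1)))" "3/64" "(-(Y*(Y-1)))" "(-(1/2*(Y-1) + 1/2*Y))" T, OF Q0 D0 nz(6) Pe Yd Pd'])
  have a2: "(Y*(Y-1) + Y*(Y-T) + (Y-1)*(Y-T))/(2*(Y*(Y-1)*(Y-T))) = 1/2*(1/Y + 1/(Y-1) + 1/(Y-T))"
    using nz t1 by (simp add: field_simps)
  have a1: "(-(Y*(Y-1)))/(Y*(Y-1)*(Y-T)) - (2*T-1)/(T*(T-1)) = -(1/T + 1/(T-1) + 1/(Y-T))"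
  proof -
    have yy: "Y*(Y-1) \<noteq> 0" using nz t1 by simp
    have a: "(-(Y*(Y-1)))/(Y*(Y-1)*(Y-T)) = -(1/(Y-T))"
      using yy by (simp add: mult.assoc[symmetric])
    have b: "(2*T-1)/(T*(T-1)) = 1/T + 1/(T-1)" using nz t1 by (simp add: field_simps)
    show ?thesis unfolding a b by simp
  qed
  have a0: "(-(Y*(Y-1) + Y*(Y-T) + (Y-1)*(Y-T))*(1/2*(Y-1)*(Y-T) + 1/2*Y*(Y-T) - 1/2*Y*(Y-1))^2/(2*(Y*(Y-1)*(Y-T))*(T*(T-1))) + (1/2*((Y-1)+(Y-T)) + 1/2*(Y+(Y-T)) + (1/2-1)*(Y+(Y-1)))*(1/2*(Y-1)*(Y-T) + 1/2*Y*(Y-T) - 1/2*Y*(Y-1))/(T*(T-1)) + (-(Y*(Y-1)))*(1/2*(Y-1)*(Y-T) + 1/2*Y*(Y-T) - 1/2*Y*(Y-1))/(Y*(Y-1)*(Y-T)) - (-(1/2*(Y-1) + 1/2*Y)) - 2*(Y*(Y-1)*(Y-T))*(3/64)/(T*(T-1)))/(T*(T-1))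
      = Y*(Y-1)*(Y-T)/(T^2*(T-1)^2)*(1/32 + -1/8*T/Y^2 + 1/8*(T-1)/(Y-1)^2 + 3/8*T*(T-1)/(Y-T)^2)"
    unfolding A0frac[OF Q0 D0] A0poly
    by (rule C0[OF nz(3) t1(2) t1(3) nz(1) t1(1)])
  show ?thesis
    unfolding E pvi_rhs_def pvals F_def[symmetric]
    by (rule quadcomb[OF a2 a1 a0])
qed


lemma divA: fixes T Yd Td X :: complex assumes "T \<noteq> 0" "T \<noteq> 1" "Td \<noteq> 0" "T*(T-1)*Yd = Td*X"
  shows "Yd/Td = X/(T*(T-1))"
proof -
  have "T - 1 \<noteq> 0" using assms by simp
  then show ?thesis using assms by (simp add: field_simps)
qed

theorem mainTheorem12:
  shows "pvi_param_solution (1/2) (1/2) (1/2) (3/4) yfun tfun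
           {s. yden s \<noteq> 0 \<and> tden s \<noteq> 0}"
  unfolding pvi_param_solution_def Let_def
proof (intro ballI impI)
  fix s assume sS: "s \<in> {s. yden s \<noteq> 0 \<and> tden s \<noteq> 0}" and hTd: "deriv tfun s \<noteq> 0"
    and hy0: "yfun s \<noteq> 0" and hy1: "yfun s \<noteq> 1" and hyt: "yfun s \<noteq> tfun s"
    and ht0: "tfun s \<noteq> 0" and ht1: "tfun s \<noteq> 1"
  define N where "N = {u. qDy \<i> u \<noteq> 0 \<and> qDt \<i> u \<noteq> 0 \<and> qPD \<i> u \<noteq> 0}"
  have openN: "open N" unfolding N_def
    by (intro open_Collect_conj open_Collect_neq)
       (auto simp: qDy_def qDt_def qPD_def qa_def qe1_def qe2_def qc_def qhp_def qhm_def qk_def qd_def qcc_def qdm_def qdq_def qr8a_def qr8b_def qr26_def qr24_def intro!: continuous_intros)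
  have sDy: "qDy \<i> s \<noteq> 0" and sDt: "qDt \<i> s \<noteq> 0" using sS by (auto simp: yden_eq tden_eq)
  note fTs = factT[OF sDt]
  have "qa \<i> s \<noteq> 0 \<and> qe1 \<i> s \<noteq> 0 \<and> qe2 \<i> s \<noteq> 0" using ht0 fTs(1) by auto
  moreover have "qcc \<i> s \<noteq> 0 \<and> qdm \<i> s \<noteq> 0 \<and> qdq \<i> s \<noteq> 0"
  proof -
    have "tfun s - 1 \<noteq> 0" using ht1 by simp
    then show ?thesis using fTs(2) by auto
  qed
  ultimately have sPD: "qPD \<i> s \<noteq> 0" by (simp add: qPD_def)
  have sN: "s \<in> N" unfolding N_def using sDy sDt sPD by simp
  have onN: "phiG (tfun u) (yfun u) (pfun u) = deriv yfun u / deriv tfun u" if uN: "u \<in> N" for u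
  proof -
    have u1: "qDy \<i> u \<noteq> 0" "qDt \<i> u \<noteq> 0" "qPD \<i> u \<noteq> 0" using uN unfolding N_def by auto
    note nz = nzDy[OF u1(1)] nzPD[OF u1(3)]
    note fT = factT[OF u1(2)]
    have t0: "tfun u \<noteq> 0" using nz fT(1) by simp
    have "tfun u - 1 \<noteq> 0" using nz fT(2) by simp
    then have t1: "tfun u \<noteq> 1" by simp
    have td0: "TdF u \<noteq> 0" using nz fT(3) by simp
    have "deriv yfun u = YdF u" by (rule DERIV_imp_deriv[OF dY[OF u1(1)]])
    moreover have "deriv tfun u = TdF u" by (rule DERIV_imp_deriv[OF dT[OF u1(2)]])
    ultimately show ?thesis unfolding phiG_def using divA[OF t0 t1 td0 hAB(1)[OF u1]] by simp
  qed
  have dG: "((\<lambda>u. phiG (tfun u) (yfun u) (pfun u)) has_field_derivative dphiG (tfun s) (yfun s) (pfun s) (TdF s) (YdF s) (PdF s)) (at s)"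
    by (rule chainG[OF dT[OF sDt] dY[OF sDy] dP[OF sPD] ht0 ht1])
  have dy1: "((\<lambda>u. deriv yfun u / deriv tfun u) has_field_derivative dphiG (tfun s) (yfun s) (pfun s) (TdF s) (YdF s) (PdF s)) (at s)"
    by (rule has_field_derivative_transform_within_open[OF dG openN sN onN])
  have e1: "deriv (\<lambda>u. deriv yfun u / deriv tfun u) s = dphiG (tfun s) (yfun s) (pfun s) (TdF s) (YdF s) (PdF s)"
    by (rule DERIV_imp_deriv[OF dy1])
  have e2: "deriv tfun s = TdF s" by (rule DERIV_imp_deriv[OF dT[OF sDt]])
  have e3: "deriv yfun s = YdF s" by (rule DERIV_imp_deriv[OF dY[OF sDy]])
  have td0: "TdF s \<noteq> 0" using hTd e2 by simp
  show "deriv (\<lambda>u. deriv yfun u / deriv tfun u) s / deriv tfun s =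
        pvi_rhs (1/2) (1/2) (1/2) (3/4) (tfun s) (yfun s) (deriv yfun s / deriv tfun s)"
    unfolding e1 e2 e3
    by (rule genH[OF ht0 ht1 hy0 hy1 hyt td0 hAB(1)[OF sDy sDt sPD] hAB(2)[OF sDy sDt sPD]])
qed

end
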